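(* Fix an integer $n\ge 1$, real numbers $c_1<c_2<\cdots<c_n$ and a real number $\epsilon$. On $\mathbb{R}^3$ with coordinates $(x,y,z)$ put $\rho=\sqrt{x^2+y^2}$, $r_j=\sqrt{x^2+y^2+(z-c_j)^2}$ and $$V_\epsilon=\frac{\epsilon}{2}+\frac12\sum_{j=1}^n\frac{1}{r_j},\qquad \alpha=-\frac12\sum_{j=1}^n\frac{x\,dy-y\,dx}{r_j\,(r_j-z+c_j)},$$ defined on $U=\mathbb{R}^3\setminus\{(0,0,z): z\ge c_1\}$. On $U\times S^1$, with $\varphi$ the angular coordinate on $S^1$, let $$g_\epsilon=\frac{1}{V_\epsilon}(d\varphi+\alpha)^2+V_\epsilon\,(dx^2+dy^2+dz^2),$$ considered on the open subset $W$ of $U\times S^1$ where $V_\epsilon\ne0$ and $\rho>0$. Let $$z_1=\prod_{j=1}^n\bigl(r_j-(z-c_j)\bigr)^{1/2}\,e^{-\frac{\epsilon}{2}z+\sqrt{-1}\,\varphi},\qquad z_2=x+\sqrt{-1}\,y,$$ and define $\beta_1=z_1$, $\alpha_1=z_2/z_1$ (so $z_1=\beta_1$, $z_2=\alpha_1\beta_1$). Set $S=\sum_{j=1}^n\frac{r_j+z-c_j}{r_j}$. Then on $W$, $$\begin{aligned}g_\epsilon=&\Bigl[V_\epsilon\rho^2+\frac{S^2}{4V_\epsilon}\Bigr]\frac{d\alpha_1}{\alpha_1}\frac{d\bar\alpha_1}{\bar\alpha_1}+\Bigl[V_\epsilon\rho^2-\frac{S}{2V_\epsilon}+\frac{S^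2}{4V_\epsilon}\Bigr]\Bigl(\frac{d\alpha_1}{\alpha_1}\frac{d\bar\beta_1}{\bar\beta_1}+\frac{d\beta_1}{\beta_1}\frac{d\bar\alpha_1}{\bar\alpha_1}\Bigr)\\&+\Bigl[\frac{1}{V_\epsilon}+V_\epsilon\rho^2-\frac{S}{V_\epsilon}+\frac{S^2}{4V_\epsilon}\Bigr]\frac{d\beta_1}{\beta_1}\frac{d\bar\beta_1}{\bar\beta_1}.\end{aligned}$$
   Context: For $\epsilon>0$, $g_\epsilon$ is the (toric) multi-Taub-NUT metric; for $\epsilon=0$ it is the Gibbons–Hawking metric. The functions $z_1,z_2$ (hence $\alpha_1,\beta_1$) are holomorphic for the complex structure whose $(1,0)$-forms are spanned by $dx+\sqrt{-1}\,dy$ and $(d\varphi+\alpha)+\sqrt{-1}\,V_\epsilon\,dz$. A product $ab$ of two (complex) $1$-forms denotes the symmetric product $\tfrac12(a\otimes b+b\otimes a)$, so that e.g. $(dx+\sqrt{-1}dy)(dx-\sqrt{-1}dy)=dx^2+dy^2$; $dx^2$ means $dx\,dx$. *)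

theory Defs
  imports "HOL-Analysis.Analysis"
begin

text \<open>Points of U x S^1 in coordinates (x,y,z,phi); phi is a real lift of the
  angle on S^1 (all functions below are 2pi-periodic in phi).  Tangent vectors
  are written in the same coordinates, so dx(v) = px v etc.\<close>
type_synonym pt = "real \<times> real \<times> real \<times> real"

definition px :: "pt \<Rightarrow> real" where "px p = fst p"
definition py :: "pt \<Rightarrow> real" where "py p = fst (snd p)"
definition pz :: "pt \<Rightarrow> real" where "pz p = fst (snd (snd p))"
definition pphi :: "pt \<Rightarrow> real" where "pphi p = snd (snd (snd p))"

definition rho :: "pt \<Rightarrow> real" where "rho p = sqrt ((px p)\<^sup>2 + (py p)\<^sup>2)"

definition rr :: "(nat \<Rightarrow> real) \<Rightarrow> nat \<Rightarrow> pt \<Rightarrow> real" where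
  "rr c j p = sqrt ((px p)\<^sup>2 + (py p)\<^sup>2 + (pz p - c j)\<^sup>2)"

definition Veps :: "real \<Rightarrow> nat \<Rightarrow> (nat \<Rightarrow> real) \<Rightarrow> pt \<Rightarrow> real" where
  "Veps eps n c p = eps / 2 + 1/2 * (\<Sum>j=1..n. 1 / rr c j p)"

definition alphaF :: "nat \<Rightarrow> (nat \<Rightarrow> real) \<Rightarrow> pt \<Rightarrow> pt \<Rightarrow> real" where
  "alphaF n c p v = - 1/2 * (\<Sum>j=1..n.
      (px p * py v - py p * px v) / (rr c j p * (rr c j p - pz p + c j)))"

definition geps :: "real \<Rightarrow> nat \<Rightarrow> (nat \<Rightarrow> real) \<Rightarrow> pt \<Rightarrow> pt \<Rightarrow> pt \<Rightarrow> real" where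
  "geps eps n c p v w =
     1 / Veps eps n c p * ((pphi v + alphaF n c p v) * (pphi w + alphaF n c p w))
     + Veps eps n c p * (px v * px w + py v * py w + pz v * pz w)"

text \<open>The domain W (in coordinates): V_eps \<noteq> 0 and rho > 0 (which implies p \<in> U).\<close>
definition Wdom :: "real \<Rightarrow> nat \<Rightarrow> (nat \<Rightarrow> real) \<Rightarrow> pt set" where
  "Wdom eps n c = {p. rho p > 0 \<and> Veps eps n c p \<noteq> 0}"

definition z1 :: "real \<Rightarrow> nat \<Rightarrow> (nat \<Rightarrow> real) \<Rightarrow> pt \<Rightarrow> complex" where
  "z1 eps n c p = complex_of_real (\<Prod>j=1..n. sqrt (rr c j p - (pz p - c j)))
      * exp (complex_of_real (- eps / 2 * pz p) + \<i> * complex_of_real (pphi p))"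

definition z2 :: "pt \<Rightarrow> complex" where "z2 p = Complex (px p) (py p)"

definition beta1 :: "real \<Rightarrow> nat \<Rightarrow> (nat \<Rightarrow> real) \<Rightarrow> pt \<Rightarrow> complex" where
  "beta1 eps n c p = z1 eps n c p"

definition alpha1 :: "real \<Rightarrow> nat \<Rightarrow> (nat \<Rightarrow> real) \<Rightarrow> pt \<Rightarrow> complex" where
  "alpha1 eps n c p = z2 p / z1 eps n c p"

definition Ssum :: "nat \<Rightarrow> (nat \<Rightarrow> real) \<Rightarrow> pt \<Rightarrow> real" where
  "Ssum n c p = (\<Sum>j=1..n. (rr c j p + pz p - c j) / rr c j p)"

definition dlog :: "(pt \<Rightarrow> complex) \<Rightarrow> pt \<Rightarrow> pt \<Rightarrow> complex" where
  "dlog f p v = frechet_derivative f (at p) v / f p"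

definition dlogbar :: "(pt \<Rightarrow> complex) \<Rightarrow> pt \<Rightarrow> pt \<Rightarrow> complex" where
  "dlogbar f p v = cnj (dlog f p v)"

definition symp :: "(pt \<Rightarrow> complex) \<Rightarrow> (pt \<Rightarrow> complex) \<Rightarrow> pt \<Rightarrow> pt \<Rightarrow> complex" where
  "symp a b v w = (a v * b w + a w * b v) / 2"

end

theory Submission
  imports Defs
begin

lemma bl_px: "bounded_linear px" unfolding px_def by (rule bounded_linear_fst)
lemma bl_py: "bounded_linear py" unfolding py_def[abs_def]
  using bounded_linear_compose[OF bounded_linear_fst bounded_linear_snd] by (simp add: o_def)
lemma bl_pz: "bounded_linear pz" unfolding pz_def[abs_def]
  using bounded_linear_compose[OF bounded_linear_fst bounded_linear_compose[OF bounded_linear_snd bounded_linear_snd]] by (simp add: o_def)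
lemma bl_pphi: "bounded_linear pphi" unfolding pphi_def[abs_def]
  using bounded_linear_compose[OF bounded_linear_snd bounded_linear_compose[OF bounded_linear_snd bounded_linear_snd]] by (simp add: o_def)

lemma hd_px[derivative_intros]: "(px has_derivative px) F" using bl_px by (rule bounded_linear_imp_has_derivative)
lemma hd_py[derivative_intros]: "(py has_derivative py) F" using bl_py by (rule bounded_linear_imp_has_derivative)
lemma hd_pz[derivative_intros]: "(pz has_derivative pz) F" using bl_pz by (rule bounded_linear_imp_has_derivative)
lemma hd_pphi[derivative_intros]: "(pphi has_derivative pphi) F" using bl_pphi by (rule bounded_linear_imp_has_derivative)

lemma rr_hd:
  assumes "rr c j p > 0"
  shows "(rr c j has_derivative (\<lambda>v. (px p*px v + py p*py v + (pz p - c j)*pz v)/rr c j p)) (at p)"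
proof -
  define g where "g = (\<lambda>p. (px p)\<^sup>2 + (py p)\<^sup>2 + (pz p - c j)\<^sup>2)"
  have g: "(g has_derivative (\<lambda>v. 2*(px p*px v + py p*py v + (pz p - c j)*pz v))) (at p)"
    unfolding g_def by (auto intro!: derivative_eq_intros simp: algebra_simps)
  have gp: "g p > 0" using assms unfolding rr_def g_def by simp
  have r: "rr c j = (\<lambda>p. sqrt (g p))" unfolding rr_def[abs_def] g_def by simp
  have "((\<lambda>p. sqrt (g p)) has_derivative (\<lambda>v. 2*(px p*px v + py p*py v + (pz p - c j)*pz v) * (inverse (sqrt (g p)) / 2))) (at p)"
    by (rule DERIV_compose_FDERIV[OF DERIV_real_sqrt[OF gp] g])
  then show ?thesis unfolding r
  proof (rule has_derivative_eq_rhs)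
    have "sqrt (g p) > 0" using gp by simp
    then show "(\<lambda>v. 2*(px p*px v + py p*py v + (pz p - c j)*pz v) * (inverse (sqrt (g p)) / 2)) =
      (\<lambda>v. (px p*px v + py p*py v + (pz p - c j)*pz v)/sqrt (g p))"
      by (intro ext) (simp add: field_simps)
  qed
qed

lemma cexp_hd:
  assumes "(g has_derivative g') (at x)"
  shows "((\<lambda>x. exp (g x :: complex)) has_derivative (\<lambda>h. g' h * exp (g x))) (at x)"
  using has_derivative_compose[OF assms DERIV_exp[unfolded has_field_derivative_def]] by (simp add: mult.commute)

lemma dlog_eq: "(f has_derivative f') (at p) \<Longrightarrow> dlog f p v = f' v / f p"
  unfolding dlog_def using frechet_derivative_at by metis

lemma sumratio:
  fixes f d :: "nat \<Rightarrow> real"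
  assumes "finite I" "\<And>i. i \<in> I \<Longrightarrow> f i \<noteq> 0"
  shows "(\<Sum>i\<in>I. d i * (\<Prod>j\<in>I-{i}. f j)) / (\<Prod>j\<in>I. f j) = (\<Sum>i\<in>I. d i / f i)"
  unfolding sum_divide_distrib
proof (rule sum.cong[OF refl])
  fix i assume i: "i \<in> I"
  have "(\<Prod>j\<in>I. f j) = f i * (\<Prod>j\<in>I-{i}. f j)" using prod.remove[OF assms(1) i] .
  moreover have "(\<Prod>j\<in>I-{i}. f j) \<noteq> 0" using assms by (simp add: prod_zero_iff)
  ultimately show "d i * (\<Prod>j\<in>I-{i}. f j) / (\<Prod>j\<in>I. f j) = d i / f i"
    using assms(2)[OF i] by (simp add: field_simps)
qed

lemma beta_dlog:
  assumes pos: "\<And>j. j \<in> {1..n} \<Longrightarrow> rr c j p > 0 \<and> rr c j p - (pz p - c j) > 0"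
  shows "beta1 eps n c differentiable (at p) \<and> beta1 eps n c p \<noteq> 0 \<and> dlog (beta1 eps n c) p v = complex_of_real ((\<Sum>j=1..n.
       ((px p*px v + py p*py v + (pz p - c j)*pz v)/rr c j p - pz v) / (2*(rr c j p - (pz p - c j))))
       - eps/2*pz v) + \<i> * complex_of_real (pphi v)"
proof -
  define Q where "Q = (\<lambda>j p. rr c j p - (pz p - c j))"
  define Qd where "Qd = (\<lambda>j v. (px p*px v + py p*py v + (pz p - c j)*pz v)/rr c j p - pz v)"
  have sq: "((\<lambda>p. sqrt (Q j p)) has_derivative (\<lambda>v. Qd j v * (inverse (sqrt (Q j p)) / 2))) (at p)"
    if j: "j \<in> {1..n}" for j
  proof -
    have h2: "((\<lambda>x. pz x - c j) has_derivative pz) (at p)"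
      using has_derivative_diff[OF hd_pz has_derivative_const[of "c j"]] by simp
    have hQ: "(Q j has_derivative Qd j) (at p)"
      unfolding Q_def[abs_def] Qd_def
      by (intro has_derivative_diff rr_hd h2) (use pos[OF j] in auto)
    have qp: "Q j p > 0" using pos[OF j] by (simp add: Q_def)
    show ?thesis
      using DERIV_compose_FDERIV[where g="Q j", OF DERIV_real_sqrt[OF qp] hQ] .
  qed
  define P where "P = (\<lambda>p. \<Prod>j\<in>{1..n}. sqrt (Q j p))"
  define Pd where "Pd = (\<lambda>v. \<Sum>i\<in>{1..n}. Qd i v * (inverse (sqrt (Q i p)) / 2) * (\<Prod>j\<in>{1..n}-{i}. sqrt (Q j p)))"
  have hP: "(P has_derivative Pd) (at p)"
    unfolding P_def Pd_def by (rule has_derivative_prod) (rule sq)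
  define G where "G = (\<lambda>p. complex_of_real (- eps / 2 * pz p) + \<i> * complex_of_real (pphi p))"
  define Gd where "Gd = (\<lambda>v. complex_of_real (- eps / 2 * pz v) + \<i> * complex_of_real (pphi v))"
  have hG: "(G has_derivative Gd) (at p)"
    unfolding G_def Gd_def by (auto intro!: derivative_eq_intros)
  have b: "beta1 eps n c = (\<lambda>p. complex_of_real (P p) * exp (G p))"
    unfolding beta1_def z1_def[abs_def] P_def Q_def G_def by simp
  have hb: "(beta1 eps n c has_derivative (\<lambda>h. complex_of_real (P p) * (Gd h * exp (G p)) + complex_of_real (Pd h) * exp (G p))) (at p)"
    unfolding b by (rule has_derivative_mult[OF has_derivative_of_real[OF hP] cexp_hd[OF hG]])
  have Qpos: "\<And>j. j \<in> {1..n} \<Longrightarrow> sqrt (Q j p) \<noteq> 0" using pos by (fastforce simp add: Q_def)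
  have Pnz: "P p \<noteq> 0" unfolding P_def using Qpos by (simp add: prod_zero_iff)
  have "dlog (beta1 eps n c) p v = (complex_of_real (P p) * (Gd v * exp (G p)) + complex_of_real (Pd v) * exp (G p)) / (complex_of_real (P p) * exp (G p))"
    using dlog_eq[OF hb] by (simp add: b)
  also have "\<dots> = Gd v + complex_of_real (Pd v / P p)"
    using Pnz by (simp add: field_simps)
  also have "Pd v / P p = (\<Sum>i\<in>{1..n}. Qd i v * (inverse (sqrt (Q i p)) / 2) / sqrt (Q i p))"
    unfolding Pd_def P_def by (rule sumratio) (use Qpos in auto)
  also have "\<dots> = (\<Sum>i\<in>{1..n}. Qd i v / (2 * Q i p))"
  proof (rule sum.cong[OF refl])
    fix i assume i: "i \<in> {1..n}"
    have "Q i p > 0" using pos[OF i] by (simp add: Q_def)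
    then show "Qd i v * (inverse (sqrt (Q i p)) / 2) / sqrt (Q i p) = Qd i v / (2 * Q i p)"
      by (simp add: field_simps)
  qed
  finally have "dlog (beta1 eps n c) p v = complex_of_real ((\<Sum>j=1..n.
       ((px p*px v + py p*py v + (pz p - c j)*pz v)/rr c j p - pz v) / (2*(rr c j p - (pz p - c j))))
       - eps/2*pz v) + \<i> * complex_of_real (pphi v)" unfolding Gd_def Qd_def Q_def by (simp add: algebra_simps)
  moreover have "beta1 eps n c differentiable (at p)" using hb by (auto simp: differentiable_def)
  moreover have "beta1 eps n c p \<noteq> 0" using Pnz by (simp add: b)
  ultimately show ?thesis by blast
qed

lemma z2_hd: "(z2 has_derivative z2) (at p)"
proof -
  have e: "z2 = (\<lambda>p. complex_of_real (px p) + \<i> * complex_of_real (py p))"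
    by (auto simp: z2_def complex_eq_iff)
  show ?thesis unfolding e by (auto intro!: derivative_eq_intros)
qed

lemma alpha_dlog:
  assumes "beta1 eps n c differentiable (at p)" "beta1 eps n c p \<noteq> 0" "z2 p \<noteq> 0"
  shows "dlog (alpha1 eps n c) p v = z2 v / z2 p - dlog (beta1 eps n c) p v"
proof -
  define B where "B = beta1 eps n c"
  define B' where "B' = frechet_derivative B (at p)"
  have hB: "(B has_derivative B') (at p)" using assms(1) unfolding B_def B'_def
    using frechet_derivative_works by blast
  have a: "alpha1 eps n c = (\<lambda>p. z2 p / B p)" unfolding alpha1_def[abs_def] B_def beta1_def by simp
  have ha: "(alpha1 eps n c has_derivative (\<lambda>h. - z2 p * (inverse (B p) * B' h * inverse (B p)) + z2 h / B p)) (at p)"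
    unfolding a using has_derivative_divide[OF z2_hd hB] assms(2) B_def by simp
  have "dlog (alpha1 eps n c) p v = (- z2 p * (inverse (B p) * B' v * inverse (B p)) + z2 v / B p) / (z2 p / B p)"
    using dlog_eq[OF ha] a by simp
  also have "\<dots> = z2 v / z2 p - B' v / B p"
    using assms(2,3) unfolding B_def by (simp add: field_simps)
  also have "B' v / B p = dlog (beta1 eps n c) p v" unfolding dlog_def B'_def B_def ..
  finally show ?thesis .
qed

lemma alg:
  fixes R A V uv tv uw tw v3 v4 w3 w4 :: real
  assumes V: "V \<noteq> 0"
  shows "complex_of_real (1/V*((v4 - A/2*R*tv)*(w4 - A/2*R*tw)) + V*(R*(uv*uw+tv*tw)+v3*w3))
   = complex_of_real (V*R + (R*A)^2/(4*V)) * (((Complex uv tv - Complex (A/2*R*uv - V * v3) v4) * cnj (Complex uw tw - Complex (A/2*R*uw - V * w3) w4) + (Complex uw tw - Complex (A/2*R*uw - V * w3) w4) * cnj (Complex uv tv - Complex (A/2*R*uv - V * v3) v4))/2)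
   + complex_of_real (V*R - (R*A)/(2*V) + (R*A)^2/(4*V)) * (((Complex uv tv - Complex (A/2*R*uv - V * v3) v4) * cnj (Complex (A/2*R*uw - V * w3) w4) + (Complex uw tw - Complex (A/2*R*uw - V * w3) w4) * cnj (Complex (A/2*R*uv - V * v3) v4))/2 + (Complex (A/2*R*uv - V * v3) v4 * cnj (Complex uw tw - Complex (A/2*R*uw - V * w3) w4) + Complex (A/2*R*uw - V * w3) w4 * cnj (Complex uv tv - Complex (A/2*R*uv - V * v3) v4))/2)
   + complex_of_real (1/V + V*R - (R*A)/V + (R*A)^2/(4*V)) * ((Complex (A/2*R*uv - V * v3) v4 * cnj (Complex (A/2*R*uw - V * w3) w4) + Complex (A/2*R*uw - V * w3) w4 * cnj (Complex (A/2*R*uv - V * v3) v4))/2)"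
  using V
  apply (simp add: complex_eq_iff)
  apply (simp add: field_simps)
  apply (simp add: algebra_simps power2_eq_square)
  done

theorem mainTheorem2:
  fixes n :: nat and c :: "nat \<Rightarrow> real" and eps :: real and p v w :: pt
  assumes "n \<ge> 1"
    and "\<And>i j. 1 \<le> i \<Longrightarrow> i < j \<Longrightarrow> j \<le> n \<Longrightarrow> c i < c j"
    and "p \<in> Wdom eps n c"
  shows "complex_of_real (geps eps n c p v w) =
      complex_of_real (Veps eps n c p * (rho p)\<^sup>2 + (Ssum n c p)\<^sup>2 / (4 * Veps eps n c p))
        * symp (dlog (alpha1 eps n c) p) (dlogbar (alpha1 eps n c) p) v w
    + complex_of_real (Veps eps n c p * (rho p)\<^sup>2 - Ssum n c p / (2 * Veps eps n c p)
          + (Ssum n c p)\<^sup>2 / (4 * Veps eps n c p))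
        * (symp (dlog (alpha1 eps n c) p) (dlogbar (beta1 eps n c) p) v w
           + symp (dlog (beta1 eps n c) p) (dlogbar (alpha1 eps n c) p) v w)
    + complex_of_real (1 / Veps eps n c p + Veps eps n c p * (rho p)\<^sup>2 - Ssum n c p / Veps eps n c p
          + (Ssum n c p)\<^sup>2 / (4 * Veps eps n c p))
        * symp (dlog (beta1 eps n c) p) (dlogbar (beta1 eps n c) p) v w"
proof -
  define x where "x = px p"
  define y where "y = py p"
  define R where "R = x^2 + y^2"
  define V where "V = Veps eps n c p"
  define A where "A = (\<Sum>j=1..n. 1 / (rr c j p * (rr c j p - (pz p - c j))))"
  define uu where "uu = (\<lambda>v. (x * px v + y * py v) / R)"
  define tt where "tt = (\<lambda>v. (x * py v - y * px v) / R)"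
  have rhop: "rho p > 0" and V0: "V \<noteq> 0" using assms(3) by (auto simp: Wdom_def V_def)
  have R0: "R > 0" using rhop unfolding rho_def R_def x_def y_def by simp
  have rho2: "(rho p)^2 = R" unfolding rho_def R_def x_def y_def by simp
  have pos: "rr c j p > 0 \<and> rr c j p - (pz p - c j) > 0" for j
  proof -
    have "\<bar>pz p - c j\<bar> = sqrt ((pz p - c j)^2)" by simp
    also have "\<dots> < rr c j p" unfolding rr_def using R0 unfolding R_def x_def y_def
      by (intro real_sqrt_less_mono) simp
    finally show ?thesis by linarith
  qed
  have rr2: "(rr c j p)^2 = R + (pz p - c j)^2" for j
    unfolding rr_def R_def x_def y_def by simp
  obtain bd: "beta1 eps n c differentiable (at p)" and bnz: "beta1 eps n c p \<noteq> 0"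
    and bl: "\<And>v. dlog (beta1 eps n c) p v = complex_of_real ((\<Sum>j=1..n.
       ((px p*px v + py p*py v + (pz p - c j)*pz v)/rr c j p - pz v) / (2*(rr c j p - (pz p - c j))))
       - eps/2*pz v) + \<i> * complex_of_real (pphi v)"
    using beta_dlog[of n c p, OF pos] by blast
  have trm: "((px p*px v + py p*py v + (pz p - c j)*pz v)/rr c j p - pz v) / (2*(rr c j p - (pz p - c j)))
      = (x * px v + y * py v) * (1 / (rr c j p * (rr c j p - (pz p - c j)))) / 2 - pz v * (1 / rr c j p) / 2" for v j
  proof -
    have a: "rr c j p > 0" and b: "rr c j p - (pz p - c j) > 0" using pos[of j] by auto
    then have b': "rr c j p - pz p + c j \<noteq> 0" by linarith
    have gen: "\<And>r z' a b t::real. r > 0 \<Longrightarrow> r - z' \<noteq> 0 \<Longrightarrow>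
        ((a + b + z'*t)/r - t)/(2*(r - z')) = (a+b)*(1/(r*(r-z')))/2 - t*(1/r)/2"
      by (simp add: field_simps)
    show ?thesis using gen[OF a, of "pz p - c j"] b unfolding x_def y_def by simp
  qed
  have e1: "dlog (beta1 eps n c) p v = Complex (A/2*R*uu v - V * pz v) (pphi v)" for v
  proof -
    have "(\<Sum>j=1..n. ((px p*px v + py p*py v + (pz p - c j)*pz v)/rr c j p - pz v) / (2*(rr c j p - (pz p - c j))))
      = (x * px v + y * py v) * A / 2 - pz v * (\<Sum>j=1..n. 1 / rr c j p) / 2"
      unfolding trm A_def by (simp add: sum_subtractf sum_distrib_left sum_divide_distrib)
    moreover have "A/2*R*uu v = (x * px v + y * py v) * A / 2" unfolding uu_def using R0 by simp
    ultimately show ?thesis unfolding bl V_def Veps_def by (simp add: complex_eq_iff algebra_simps)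
  qed
  have z2p: "z2 p \<noteq> 0" using R0 unfolding z2_def R_def x_def y_def by (auto simp: complex_eq_iff)
  have e2: "dlog (alpha1 eps n c) p v = Complex (uu v) (tt v) - Complex (A/2*R*uu v - V * pz v) (pphi v)" for v
  proof -
    have "z2 v / z2 p = Complex (uu v) (tt v)"
      using R0 unfolding z2_def uu_def tt_def R_def x_def y_def
      by (simp add: complex_eq_iff Re_divide Im_divide field_simps power2_eq_square)
    then show ?thesis using alpha_dlog[OF bd bnz z2p, of v] e1 by simp
  qed
  have alF: "alphaF n c p v = - (A/2*R*tt v)" for v
  proof -
    have "A/2*R*tt v = (x * py v - y * px v) * A / 2" unfolding tt_def using R0 by simp
    also have "\<dots> = (\<Sum>j=1..n. (x * py v - y * px v) / (rr c j p * (rr c j p - pz p + c j))) / 2"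
      unfolding A_def by (simp add: sum_distrib_left sum_divide_distrib algebra_simps)
    finally show ?thesis unfolding alphaF_def x_def y_def by simp
  qed
  have e3: "geps eps n c p v w = 1/V*((pphi v - A/2*R*tt v)*(pphi w - A/2*R*tt w)) + V*(R*(uu v * uu w + tt v * tt w)+pz v * pz w)"
  proof -
    have num: "(x * px v + y * py v) * (x * px w + y * py w) + (x * py v - y * px v) * (x * py w - y * px w)
       = R * (px v * px w + py v * py w)" unfolding R_def by (simp add: algebra_simps power2_eq_square)
    have "R*(uu v * uu w + tt v * tt w) = ((x * px v + y * py v) * (x * px w + y * py w) + (x * py v - y * px v) * (x * py w - y * px w)) / R"
      unfolding uu_def tt_def using R0 by (simp add: field_simps power2_eq_square)
    also have "\<dots> = px v * px w + py v * py w" unfolding num using R0 by simp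
    finally have "R*(uu v * uu w + tt v * tt w) = px v * px w + py v * py w" .
    then show ?thesis unfolding geps_def alF V_def by (simp add: algebra_simps)
  qed
  have e4: "Ssum n c p = R * A"
  proof -
    have "(rr c j p + pz p - c j) / rr c j p = R * (1 / (rr c j p * (rr c j p - (pz p - c j))))" for j
    proof -
      have a: "rr c j p > 0" and b: "rr c j p - (pz p - c j) > 0" using pos[of j] by auto
      then have b': "rr c j p - pz p + c j \<noteq> 0" by linarith
      have "(rr c j p + pz p - c j) * (rr c j p - (pz p - c j)) = R"
        using rr2[of j] by (simp add: algebra_simps power2_eq_square)
      moreover have gen2: "\<And>r q N::real. r > 0 \<Longrightarrow> q \<noteq> 0 \<Longrightarrow> N * q = R \<Longrightarrow> N / r = R * (1 / (r * q))"
        by (simp add: field_simps)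
      ultimately show ?thesis using a b by (intro gen2) auto
    qed
    then show ?thesis unfolding Ssum_def A_def by (simp add: sum_distrib_left)
  qed
  show ?thesis
    unfolding symp_def dlogbar_def e1 e2 e3 e4 rho2 V_def[symmetric]
    by (rule alg[OF V0])
qed

end
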